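(* Fix an attacker label $A\in\mathcal{L}$. For all initial configurations $c_1,c_2$ of $\lambda^{dCG}$ (either both of the form $\langle\Sigma,pc,e\rangle$ evaluated with the forcing semantics, or both of the form $\langle\Sigma,pc,t\rangle$ evaluated with the thunk semantics), all environments $\theta_1,\theta_2$, and all final configurations $c_1',c_2'$: if $c_1\Downarrow^{\theta_1}c_1'$, $c_2\Downarrow^{\theta_2}c_2'$, $\theta_1\approx_A\theta_2$ and $c_1\approx_A c_2$, then $c_1'\approx_A c_2'$.
   Context: Fix a lattice $(\mathcal{L},\sqsubseteq,\sqcup)$ of labels. The coarse-grained calculus $\lambda^{dCG}$ has types $\tau::=\mathbf{unit}\mid\tau_1\to\tau_2\mid\tau_1+\tau_2\mid\tau_1\times\tau_2\mid\mathcal{L}\mid\mathbf{LIO}\,\tau\mid\mathbf{Labeled}\,\tau\mid\mathbf{Ref}\,\tau$ (standard simple type system), values $v::=()\mid(x.e,\theta)\mid\mathbf{inl}(v)\mid\mathbf{inr}(v)\mid(v_1,v_2)\mid\ell\mid\mathbf{Labeled}\,\ell\,v\mid(t,\theta)\mid n_\ell$, expressions $e::=x\mid\lambda x.e\mid e_1\,e_2\mid()\mid\ell\mid(e_1,e_2)\mid\mathbf{fst}(e)\mid\mathbf{snd}(e)\mid\mathbf{inl}(e)\mid\mathbf{inr}(e)\mid\mathbf{case}(e,x.e_1,x.e_2)\mid e_1\sqsubseteq^{?}e_2\mid t$, and thunks $t::=\mathbf{return}(e)\mid\mathbf{bind}(e,x.e)\mid\mathbf{unlabel}(e)\mid\mathbf{toLabeled}(e)\mid\mathbf{labelOf}(e)\mid\mathbf{getLabel}\mid\mathbf{taint}(e)\mid\mathbf{new}(e)\mid\,!e\mid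 e_1:=e_2\mid\mathbf{labelOfRef}(e)$. Environments $\theta$ are finite maps from variables to values; $(x.e,\theta)$ is a function closure and $(t,\theta)$ a thunk closure. Memories are finite lists $M$ of values ($|M|$ length, $M[n]$ entry, $M[n\mapsto v]$ replace/append at $n=|M|$); a store $\Sigma$ assigns a memory to each label. Pure semantics $e\Downarrow^{\theta}v$ (call-by-value, security-unaware): $x\Downarrow\theta(x)$; $()\Downarrow()$; $\ell\Downarrow\ell$; $\lambda x.e\Downarrow(x.e,\theta)$; $t\Downarrow(t,\theta)$ for a thunk $t$; $e_1\,e_2\Downarrow v$ if $e_1\Downarrow^{\theta}(x.e,\theta')$, $e_2\Downarrow^{\theta}v_2$, $e\Downarrow^{\theta'[x\mapsto v_2]}v$; pairs, projections and injections evaluate componentwise; $\mathbf{case}(e,x.e_1,x.e_2)\Downarrow v$ if $e\Downarrow^\theta\mathbf{inl}(v_1)$ and $e_1\Downarrow^{\theta[x\mapsto v_1]}v$, or $e\Downarrow^\theta\mathbf{inr}(v_2)$ and $e_2\Downarrow^{\theta[x\mapsto v_2]}v$; $e_1\sqsubseteq^{?}e_2$ evaluates both sides to labels $\ell_1,\ell_2$ and returns $\mathbf{inl}(())$ if $\ell_1\sqsubseteq\ell_2$, else $\mathbf{inr}(())$. Forcing semantics: $\langle\Sigma,pc,e\rangle\Downarrow^{\theta}\langle\Sigma',pc',v\rangle$ iff $e\Downarrow^{\theta}(t,\theta')$ and $\langle\Sigma,pc,t\rangle\Downarrow^{\theta'}\langle\Sigma',pc',v\rangle$. Thunk semantics (mutually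 defined): (Return) if $e\Downarrow^\theta v$ then $\langle\Sigma,pc,\mathbf{return}(e)\rangle\Downarrow^\theta\langle\Sigma,pc,v\rangle$. (Bind) if $\langle\Sigma,pc,e_1\rangle\Downarrow^\theta\langle\Sigma',pc',v_1\rangle$ and $\langle\Sigma',pc',e_2\rangle\Downarrow^{\theta[x\mapsto v_1]}\langle\Sigma'',pc'',v\rangle$ (forcing) then $\mathbf{bind}(e_1,x.e_2)$ yields $\langle\Sigma'',pc'',v\rangle$. (ToLabeled) if $\langle\Sigma,pc,e\rangle\Downarrow^\theta\langle\Sigma',pc',v\rangle$ then $\mathbf{toLabeled}(e)$ yields $\langle\Sigma',pc,\mathbf{Labeled}\,pc'\,v\rangle$. (Unlabel) if $e\Downarrow^\theta\mathbf{Labeled}\,\ell\,v$ then $\mathbf{unlabel}(e)$ yields $\langle\Sigma,pc\sqcup\ell,v\rangle$. (LabelOf) if $e\Downarrow^\theta\mathbf{Labeled}\,\ell\,v$ then $\mathbf{labelOf}(e)$ yields $\langle\Sigma,pc\sqcup\ell,\ell\rangle$. (GetLabel) yields $\langle\Sigma,pc,pc\rangle$. (Taint) if $e\Downarrow^\theta\ell$ then $\mathbf{taint}(e)$ yields $\langle\Sigma,pc\sqcup\ell,()\rangle$. (New) if $e\Downarrow^\theta\mathbf{Labeled}\,\ell\,v$, $pc\sqsubseteq\ell$, $n=|\Sigma(\ell)|$, then $\mathbf{new}(e)$ yields $\langle\Sigma[\ell\mapsto\Sigma(\ell)[n\mapsto v]],pc,n_\ell\rangle$. (Read) if $e\Downarrow^\theta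 n_\ell$ and $\Sigma(\ell)[n]=v$ then $!e$ yields $\langle\Sigma,pc\sqcup\ell,v\rangle$. (Write) if $e_1\Downarrow^\theta n_{\ell_1}$, $e_2\Downarrow^\theta\mathbf{Labeled}\,\ell_2\,v$, $\ell_2\sqsubseteq\ell_1$, $pc\sqsubseteq\ell_1$, then $e_1:=e_2$ yields $\langle\Sigma[\ell_1\mapsto\Sigma(\ell_1)[n\mapsto v]],pc,()\rangle$. (LabelOfRef) if $e\Downarrow^\theta n_\ell$ then $\mathbf{labelOfRef}(e)$ yields $\langle\Sigma,pc\sqcup\ell,\ell\rangle$. Final configurations are $\langle\Sigma,pc,v\rangle$. $A$-equivalence $\approx_A$ on values: $\mathbf{Labeled}\,\ell\,v_1\approx_A\mathbf{Labeled}\,\ell\,v_2$ if $\ell\sqsubseteq A$ and $v_1\approx_A v_2$; $\mathbf{Labeled}\,\ell_1\,v_1\approx_A\mathbf{Labeled}\,\ell_2\,v_2$ if $\ell_1,\ell_2\not\sqsubseteq A$; $()\approx_A()$, $\ell\approx_A\ell$; injections and pairs homomorphically (same injection, related components); function closures $(x.e_1,\theta_1)\approx_A(x.e_2,\theta_2)$ and thunk closures $(t_1,\theta_1)\approx_A(t_2,\theta_2)$ if the bodies are $\alpha$-equivalent and $\theta_1\approx_A\theta_2$ (same domain, pointwise related); $n_\ell\approx_A n_\ell$ if $\ell\sqsubseteq A$; $(n_1)_{\ell_1}\approx_A(n_2)_{\ell_2}$ if $\ell_1,\ell_2\not\sqsubseteq A$. Memories at label $\ell$: always related if $\ell\not\sqsubseteq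 A$, otherwise same length and pointwise related; stores pointwise. Initial configurations: $\langle\Sigma_1,pc_1,e_1\rangle\approx_A\langle\Sigma_2,pc_2,e_2\rangle$ iff $\Sigma_1\approx_A\Sigma_2$, $pc_1=pc_2$ and $e_1,e_2$ $\alpha$-equivalent (same for thunks). Final configurations: $\langle\Sigma_1,pc_1,v_1\rangle\approx_A\langle\Sigma_2,pc_2,v_2\rangle$ iff $\Sigma_1\approx_A\Sigma_2$ and either $pc_1\not\sqsubseteq A$ and $pc_2\not\sqsubseteq A$, or $pc_1=pc_2\sqsubseteq A$ and $v_1\approx_A v_2$. *)

theory Defs
  imports Main
begin

(* Labels: elements of a lattice type 'l; \<sqsubseteq> is \<le>, \<squnion> is sup.
   Variables are de Bruijn indices, so alpha-equivalence of bodies is syntactic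
   equality; an environment \<theta> is a list of values (index i \<mapsto> \<theta>!i). *)

datatype 'l exp =
    Var nat
  | Lam "'l exp"                       (* \<lambda>x.e, binds index 0 *)
  | App "'l exp" "'l exp"
  | UnitE
  | LabE 'l
  | PairE "'l exp" "'l exp"
  | Fst "'l exp"
  | Snd "'l exp"
  | InlE "'l exp"
  | InrE "'l exp"
  | Case "'l exp" "'l exp" "'l exp"   (* case(e, x.e1, x.e2), e1/e2 bind index 0 *)
  | LeqQ "'l exp" "'l exp"
  | ThunkE "'l thunk"
and 'l thunk =
    Return "'l exp"
  | Bind "'l exp" "'l exp"            (* bind(e1, x.e2), e2 binds index 0 *)
  | Unlabel "'l exp"
  | ToLabeled "'l exp"
  | LabelOf "'l exp"
  | GetLabel
  | Taint "'l exp"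
  | New "'l exp"
  | Read "'l exp"
  | Write "'l exp" "'l exp"
  | LabelOfRef "'l exp"

datatype 'l val =
    VUnit
  | VClos "'l exp" "'l val list"
  | VInl "'l val"
  | VInr "'l val"
  | VPair "'l val" "'l val"
  | VLab 'l
  | VLabeled 'l "'l val"
  | VThunk "'l thunk" "'l val list"
  | VRef nat 'l

type_synonym 'l env = "'l val list"
type_synonym 'l mem = "'l val list"
type_synonym 'l store = "'l \<Rightarrow> 'l mem"

inductive pure_eval :: "'l::lattice env \<Rightarrow> 'l exp \<Rightarrow> 'l val \<Rightarrow> bool" where
  PVar: "i < length \<theta> \<Longrightarrow> pure_eval \<theta> (Var i) (\<theta> ! i)"
| PUnit: "pure_eval \<theta> UnitE VUnit"
| PLab: "pure_eval \<theta> (LabE l) (VLab l)"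
| PLam: "pure_eval \<theta> (Lam e) (VClos e \<theta>)"
| PThunk: "pure_eval \<theta> (ThunkE t) (VThunk t \<theta>)"
| PApp: "pure_eval \<theta> e1 (VClos e \<theta>') \<Longrightarrow> pure_eval \<theta> e2 v2 \<Longrightarrow>
         pure_eval (v2 # \<theta>') e v \<Longrightarrow> pure_eval \<theta> (App e1 e2) v"
| PPair: "pure_eval \<theta> e1 v1 \<Longrightarrow> pure_eval \<theta> e2 v2 \<Longrightarrow> pure_eval \<theta> (PairE e1 e2) (VPair v1 v2)"
| PFst: "pure_eval \<theta> e (VPair v1 v2) \<Longrightarrow> pure_eval \<theta> (Fst e) v1"
| PSnd: "pure_eval \<theta> e (VPair v1 v2) \<Longrightarrow> pure_eval \<theta> (Snd e) v2"
| PInl: "pure_eval \<theta> e v \<Longrightarrow> pure_eval \<theta> (InlE e) (VInl v)"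
| PInr: "pure_eval \<theta> e v \<Longrightarrow> pure_eval \<theta> (InrE e) (VInr v)"
| PCaseL: "pure_eval \<theta> e (VInl v1) \<Longrightarrow> pure_eval (v1 # \<theta>) e1 v \<Longrightarrow>
           pure_eval \<theta> (Case e e1 e2) v"
| PCaseR: "pure_eval \<theta> e (VInr v2) \<Longrightarrow> pure_eval (v2 # \<theta>) e2 v \<Longrightarrow>
           pure_eval \<theta> (Case e e1 e2) v"
| PLeqT: "pure_eval \<theta> e1 (VLab l1) \<Longrightarrow> pure_eval \<theta> e2 (VLab l2) \<Longrightarrow> l1 \<le> l2 \<Longrightarrow>
          pure_eval \<theta> (LeqQ e1 e2) (VInl VUnit)"
| PLeqF: "pure_eval \<theta> e1 (VLab l1) \<Longrightarrow> pure_eval \<theta> e2 (VLab l2) \<Longrightarrow> \<not> l1 \<le> l2 \<Longrightarrow>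
          pure_eval \<theta> (LeqQ e1 e2) (VInr VUnit)"

(* M[n \<mapsto> v]: replace entry n, or append when n = |M| (only defined for n \<le> |M|) *)
definition mem_upd :: "'a list \<Rightarrow> nat \<Rightarrow> 'a \<Rightarrow> 'a list" where
  "mem_upd M n v = (if n < length M then M[n := v] else M @ [v])"

inductive force_eval :: "'l::lattice env \<Rightarrow> 'l store \<Rightarrow> 'l \<Rightarrow> 'l exp \<Rightarrow> 'l store \<Rightarrow> 'l \<Rightarrow> 'l val \<Rightarrow> bool"
  and thunk_eval :: "'l::lattice env \<Rightarrow> 'l store \<Rightarrow> 'l \<Rightarrow> 'l thunk \<Rightarrow> 'l store \<Rightarrow> 'l \<Rightarrow> 'l val \<Rightarrow> bool"
where
  Force: "pure_eval \<theta> e (VThunk t \<theta>') \<Longrightarrow> thunk_eval \<theta>' \<Sigma> pc t \<Sigma>' pc' v \<Longrightarrow>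
          force_eval \<theta> \<Sigma> pc e \<Sigma>' pc' v"
| TReturn: "pure_eval \<theta> e v \<Longrightarrow> thunk_eval \<theta> \<Sigma> pc (Return e) \<Sigma> pc v"
| TBind: "force_eval \<theta> \<Sigma> pc e1 \<Sigma>' pc' v1 \<Longrightarrow> force_eval (v1 # \<theta>) \<Sigma>' pc' e2 \<Sigma>'' pc'' v \<Longrightarrow>
          thunk_eval \<theta> \<Sigma> pc (Bind e1 e2) \<Sigma>'' pc'' v"
| TToLabeled: "force_eval \<theta> \<Sigma> pc e \<Sigma>' pc' v \<Longrightarrow>
          thunk_eval \<theta> \<Sigma> pc (ToLabeled e) \<Sigma>' pc (VLabeled pc' v)"
| TUnlabel: "pure_eval \<theta> e (VLabeled l v) \<Longrightarrow>
          thunk_eval \<theta> \<Sigma> pc (Unlabel e) \<Sigma> (sup pc l) v"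
| TLabelOf: "pure_eval \<theta> e (VLabeled l v) \<Longrightarrow>
          thunk_eval \<theta> \<Sigma> pc (LabelOf e) \<Sigma> (sup pc l) (VLab l)"
| TGetLabel: "thunk_eval \<theta> \<Sigma> pc GetLabel \<Sigma> pc (VLab pc)"
| TTaint: "pure_eval \<theta> e (VLab l) \<Longrightarrow>
          thunk_eval \<theta> \<Sigma> pc (Taint e) \<Sigma> (sup pc l) VUnit"
| TNew: "pure_eval \<theta> e (VLabeled l v) \<Longrightarrow> pc \<le> l \<Longrightarrow> n = length (\<Sigma> l) \<Longrightarrow>
          thunk_eval \<theta> \<Sigma> pc (New e) (\<Sigma>(l := mem_upd (\<Sigma> l) n v)) pc (VRef n l)"
| TRead: "pure_eval \<theta> e (VRef n l) \<Longrightarrow> n < length (\<Sigma> l) \<Longrightarrow> \<Sigma> l ! n = v \<Longrightarrow>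
          thunk_eval \<theta> \<Sigma> pc (Read e) \<Sigma> (sup pc l) v"
| TWrite: "pure_eval \<theta> e1 (VRef n l1) \<Longrightarrow> pure_eval \<theta> e2 (VLabeled l2 v) \<Longrightarrow>
          l2 \<le> l1 \<Longrightarrow> pc \<le> l1 \<Longrightarrow> n \<le> length (\<Sigma> l1) \<Longrightarrow>
          thunk_eval \<theta> \<Sigma> pc (Write e1 e2) (\<Sigma>(l1 := mem_upd (\<Sigma> l1) n v)) pc VUnit"
| TLabelOfRef: "pure_eval \<theta> e (VRef n l) \<Longrightarrow>
          thunk_eval \<theta> \<Sigma> pc (LabelOfRef e) \<Sigma> (sup pc l) (VLab l)"

inductive val_eq :: "'l::lattice \<Rightarrow> 'l val \<Rightarrow> 'l val \<Rightarrow> bool" where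
  EqLabeledLow: "l \<le> A \<Longrightarrow> val_eq A v1 v2 \<Longrightarrow> val_eq A (VLabeled l v1) (VLabeled l v2)"
| EqLabeledHigh: "\<not> l1 \<le> A \<Longrightarrow> \<not> l2 \<le> A \<Longrightarrow> val_eq A (VLabeled l1 v1) (VLabeled l2 v2)"
| EqUnit: "val_eq A VUnit VUnit"
| EqLab: "val_eq A (VLab l) (VLab l)"
| EqInl: "val_eq A v1 v2 \<Longrightarrow> val_eq A (VInl v1) (VInl v2)"
| EqInr: "val_eq A v1 v2 \<Longrightarrow> val_eq A (VInr v1) (VInr v2)"
| EqPair: "val_eq A v1 v2 \<Longrightarrow> val_eq A w1 w2 \<Longrightarrow> val_eq A (VPair v1 w1) (VPair v2 w2)"
| EqClos: "list_all2 (val_eq A) \<theta>1 \<theta>2 \<Longrightarrow> val_eq A (VClos e \<theta>1) (VClos e \<theta>2)"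
| EqThunk: "list_all2 (val_eq A) \<theta>1 \<theta>2 \<Longrightarrow> val_eq A (VThunk t \<theta>1) (VThunk t \<theta>2)"
| EqRefLow: "l \<le> A \<Longrightarrow> val_eq A (VRef n l) (VRef n l)"
| EqRefHigh: "\<not> l1 \<le> A \<Longrightarrow> \<not> l2 \<le> A \<Longrightarrow> val_eq A (VRef n1 l1) (VRef n2 l2)"

definition env_eq :: "'l::lattice \<Rightarrow> 'l env \<Rightarrow> 'l env \<Rightarrow> bool" where
  "env_eq A \<theta>1 \<theta>2 \<longleftrightarrow> list_all2 (val_eq A) \<theta>1 \<theta>2"

definition mem_eq :: "'l::lattice \<Rightarrow> 'l \<Rightarrow> 'l mem \<Rightarrow> 'l mem \<Rightarrow> bool" where
  "mem_eq A l M1 M2 \<longleftrightarrow> (\<not> l \<le> A \<or> list_all2 (val_eq A) M1 M2)"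

definition store_eq :: "'l::lattice \<Rightarrow> 'l store \<Rightarrow> 'l store \<Rightarrow> bool" where
  "store_eq A \<Sigma>1 \<Sigma>2 \<longleftrightarrow> (\<forall>l. mem_eq A l (\<Sigma>1 l) (\<Sigma>2 l))"

(* initial configurations (expressions or thunks); alpha-equivalence = equality (de Bruijn) *)
definition init_eq :: "'l::lattice \<Rightarrow> 'l store \<times> 'l \<times> 'a \<Rightarrow> 'l store \<times> 'l \<times> 'a \<Rightarrow> bool" where
  "init_eq A c1 c2 \<longleftrightarrow> (case (c1, c2) of ((\<Sigma>1, pc1, e1), (\<Sigma>2, pc2, e2)) \<Rightarrow>
      store_eq A \<Sigma>1 \<Sigma>2 \<and> pc1 = pc2 \<and> e1 = e2)"

definition final_eq :: "'l::lattice \<Rightarrow> 'l store \<times> 'l \<times> 'l val \<Rightarrow> 'l store \<times> 'l \<times> 'l val \<Rightarrow> bool" where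
  "final_eq A c1 c2 \<longleftrightarrow> (case (c1, c2) of ((\<Sigma>1, pc1, v1), (\<Sigma>2, pc2, v2)) \<Rightarrow>
      store_eq A \<Sigma>1 \<Sigma>2 \<and>
      ((\<not> pc1 \<le> A \<and> \<not> pc2 \<le> A) \<or> (pc1 = pc2 \<and> pc1 \<le> A \<and> val_eq A v1 v2)))"

end

theory Submission
  imports Defs
begin

inductive_cases VE_Labeled: "val_eq A (VLabeled l v) w"
inductive_cases VE_Lab: "val_eq A (VLab l) w"
inductive_cases VE_Inl: "val_eq A (VInl v) w"
inductive_cases VE_Inr: "val_eq A (VInr v) w"
inductive_cases VE_Pair: "val_eq A (VPair v1 v2) w"
inductive_cases VE_Clos: "val_eq A (VClos e th) w"
inductive_cases VE_Thunk: "val_eq A (VThunk t th) w"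
inductive_cases VE_Ref: "val_eq A (VRef n l) w"

inductive_cases PE_Var: "pure_eval th (Var i) v"
inductive_cases PE_Unit: "pure_eval th UnitE v"
inductive_cases PE_Lab: "pure_eval th (LabE l) v"
inductive_cases PE_Lam: "pure_eval th (Lam e) v"
inductive_cases PE_Thunk: "pure_eval th (ThunkE t) v"
inductive_cases PE_App: "pure_eval th (App e1 e2) v"
inductive_cases PE_Pair: "pure_eval th (PairE e1 e2) v"
inductive_cases PE_Fst: "pure_eval th (Fst e) v"
inductive_cases PE_Snd: "pure_eval th (Snd e) v"
inductive_cases PE_Inl: "pure_eval th (InlE e) v"
inductive_cases PE_Inr: "pure_eval th (InrE e) v"
inductive_cases PE_Case: "pure_eval th (Case e e1 e2) v"
inductive_cases PE_Leq: "pure_eval th (LeqQ e1 e2) v"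

lemma pure_ni:
  "pure_eval th1 e v1 \<Longrightarrow> (\<And>th2 u2. pure_eval th2 e u2 \<Longrightarrow> list_all2 (val_eq A) th1 th2 \<Longrightarrow> val_eq A v1 u2)"
proof (induction arbitrary: rule: pure_eval.induct)
  case (PVar i \<theta>)
  then show ?case by (auto elim!: PE_Var dest: list_all2_nthD)
next
  case (PUnit \<theta>)
  then show ?case by (auto elim!: PE_Unit intro: val_eq.intros)
next
  case (PLab \<theta> l)
  then show ?case by (auto elim!: PE_Lab intro: val_eq.intros)
next
  case (PLam \<theta> e)
  then show ?case by (auto elim!: PE_Lam intro: val_eq.intros)
next
  case (PThunk \<theta> t)
  then show ?case by (auto elim!: PE_Thunk intro: val_eq.intros)
next
  case (PApp \<theta> e1 e \<theta>' e2 v2 v)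
  from PApp.prems(1) obtain e' th'' w2 where 1: "pure_eval th2 e1 (VClos e' th'')"
     "pure_eval th2 e2 w2" "pure_eval (w2 # th'') e' u2" by (rule PE_App) blast
  have "val_eq A (VClos e \<theta>') (VClos e' th'')" using PApp 1 by blast
  then have "e' = e" "list_all2 (val_eq A) \<theta>' th''" by (auto elim: VE_Clos)
  moreover have "val_eq A v2 w2" using PApp 1 by blast
  ultimately show ?case using PApp 1 by auto
next
  case (PPair \<theta> e1 v1 e2 v2)
  then show ?case by (auto elim!: PE_Pair intro: val_eq.intros)
next
  case (PFst \<theta> e v1 v2)
  then show ?case by (auto elim!: PE_Fst elim: VE_Pair)
next
  case (PSnd \<theta> e v1 v2)
  then show ?case by (auto elim!: PE_Snd elim: VE_Pair)
next
  case (PInl \<theta> e v)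
  then show ?case by (auto elim!: PE_Inl intro: val_eq.intros)
next
  case (PInr \<theta> e v)
  then show ?case by (auto elim!: PE_Inr intro: val_eq.intros)
next
  case (PCaseL \<theta> e v1 e1 v e2)
  from PCaseL.prems(1) consider (L) w1 where "pure_eval th2 e (VInl w1)" "pure_eval (w1 # th2) e1 u2"
    | (R) w1 where "pure_eval th2 e (VInr w1)" "pure_eval (w1 # th2) e2 u2" by (rule PE_Case) blast+
  then show ?case
  proof cases
    case L
    then have "val_eq A (VInl v1) (VInl w1)" using PCaseL by blast
    then have "val_eq A v1 w1" by (auto elim: VE_Inl)
    then show ?thesis using PCaseL L by auto
  next
    case R
    then have "val_eq A (VInl v1) (VInr w1)" using PCaseL by blast
    then show ?thesis by (auto elim: VE_Inl)
  qed
next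
  case (PCaseR \<theta> e v1 e2 v e1)
  from PCaseR.prems(1) consider (L) w1 where "pure_eval th2 e (VInl w1)" "pure_eval (w1 # th2) e1 u2"
    | (R) w1 where "pure_eval th2 e (VInr w1)" "pure_eval (w1 # th2) e2 u2" by (rule PE_Case) blast+
  then show ?case
  proof cases
    case R
    then have "val_eq A (VInr v1) (VInr w1)" using PCaseR by blast
    then have "val_eq A v1 w1" by (auto elim: VE_Inr)
    then show ?thesis using PCaseR R by auto
  next
    case L
    then have "val_eq A (VInr v1) (VInl w1)" using PCaseR by blast
    then show ?thesis by (auto elim: VE_Inr)
  qed
next
  case (PLeqT \<theta> e1 l1 e2 l2)
  from PLeqT.prems(1) consider (T) k1 k2 where "pure_eval th2 e1 (VLab k1)" "pure_eval th2 e2 (VLab k2)" "k1 \<le> k2" "u2 = VInl VUnit"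
    | (F) k1 k2 where "pure_eval th2 e1 (VLab k1)" "pure_eval th2 e2 (VLab k2)" "\<not> k1 \<le> k2" "u2 = VInr VUnit"
    by (rule PE_Leq) blast+
  then show ?case
  proof cases
    case T
    then show ?thesis by (auto intro: val_eq.intros)
  next
    case F
    have "val_eq A (VLab l1) (VLab k1)" "val_eq A (VLab l2) (VLab k2)" using PLeqT F by blast+
    then have "k1 = l1" "k2 = l2" by (auto elim: VE_Lab)
    then show ?thesis using PLeqT F by auto
  qed
next
  case (PLeqF \<theta> e1 l1 e2 l2)
  from PLeqF.prems(1) consider (T) k1 k2 where "pure_eval th2 e1 (VLab k1)" "pure_eval th2 e2 (VLab k2)" "k1 \<le> k2" "u2 = VInl VUnit"
    | (F) k1 k2 where "pure_eval th2 e1 (VLab k1)" "pure_eval th2 e2 (VLab k2)" "\<not> k1 \<le> k2" "u2 = VInr VUnit"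
    by (rule PE_Leq) blast+
  then show ?case
  proof cases
    case F
    then show ?thesis by (auto intro: val_eq.intros)
  next
    case T
    have "val_eq A (VLab l1) (VLab k1)" "val_eq A (VLab l2) (VLab k2)" using PLeqF T by blast+
    then have "k1 = l1" "k2 = l2" by (auto elim: VE_Lab)
    then show ?thesis using PLeqF T by auto
  qed
qed

lemma confine:
  "(force_eval th S pc e S' pc' v \<longrightarrow> pc \<le> pc' \<and> (\<forall>l. \<not> pc \<le> l \<longrightarrow> S' l = S l))
   \<and> (thunk_eval th S pc t S' pc' v \<longrightarrow> pc \<le> pc' \<and> (\<forall>l. \<not> pc \<le> l \<longrightarrow> S' l = S l))"
proof (induction rule: force_eval_thunk_eval.induct)
  case (TBind \<theta> \<Sigma> pc e1 \<Sigma>' pc' v1 e2 \<Sigma>'' pc'' v)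
  then show ?case by (metis order_trans)
qed (auto simp: le_supI1)

lemma store_upd:
  "store_eq A S1 S2 \<Longrightarrow> (l \<le> A \<Longrightarrow> list_all2 (val_eq A) M1 M2) \<Longrightarrow>
   store_eq A (S1(l := M1)) (S2(l := M2))"
  by (auto simp: store_eq_def mem_eq_def)

lemma store_upd_high:
  "store_eq A S1 S2 \<Longrightarrow> \<not> l1 \<le> A \<Longrightarrow> \<not> l2 \<le> A \<Longrightarrow>
   store_eq A (S1(l1 := M1)) (S2(l2 := M2))"
  by (auto simp: store_eq_def mem_eq_def)

lemma mem_upd_rel:
  "list_all2 P M1 M2 \<Longrightarrow> P v1 v2 \<Longrightarrow> list_all2 P (mem_upd M1 n v1) (mem_upd M2 n v2)"
  by (auto simp: mem_upd_def list_all2_lengthD intro: list_all2_update_cong list_all2_appendI)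

lemma high_final:
  assumes "store_eq A S1 S2" "\<not> pc \<le> A"
    and "pc \<le> pc1'" "\<forall>l. \<not> pc \<le> l \<longrightarrow> S1' l = S1 l"
    and "pc \<le> pc2'" "\<forall>l. \<not> pc \<le> l \<longrightarrow> S2' l = S2 l"
  shows "final_eq A (S1', pc1', v1) (S2', pc2', v2)"
proof -
  have "store_eq A S1' S2'"
    using assms unfolding store_eq_def mem_eq_def
    by (metis order_trans)
  moreover have "\<not> pc1' \<le> A" "\<not> pc2' \<le> A" using assms order_trans by blast+
  ultimately show ?thesis by (simp add: final_eq_def)
qed


inductive_cases FE: "force_eval th S pc e S' pc' v"
inductive_cases TE_Return: "thunk_eval th S pc (Return e) S' pc' v"
inductive_cases TE_Bind: "thunk_eval th S pc (Bind e1 e2) S' pc' v"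
inductive_cases TE_ToLabeled: "thunk_eval th S pc (ToLabeled e) S' pc' v"
inductive_cases TE_Unlabel: "thunk_eval th S pc (Unlabel e) S' pc' v"
inductive_cases TE_LabelOf: "thunk_eval th S pc (LabelOf e) S' pc' v"
inductive_cases TE_GetLabel: "thunk_eval th S pc GetLabel S' pc' v"
inductive_cases TE_Taint: "thunk_eval th S pc (Taint e) S' pc' v"
inductive_cases TE_New: "thunk_eval th S pc (New e) S' pc' v"
inductive_cases TE_Read: "thunk_eval th S pc (Read e) S' pc' v"
inductive_cases TE_Write: "thunk_eval th S pc (Write e1 e2) S' pc' v"
inductive_cases TE_LabelOfRef: "thunk_eval th S pc (LabelOfRef e) S' pc' v"

lemma main_ni:
  "(force_eval th1 S1 pc e S1' pc1' v1 \<longrightarrow> (\<forall>th2 S2 S2' pc2' v2. force_eval th2 S2 pc e S2' pc2' v2 \<longrightarrow>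
      list_all2 (val_eq A) th1 th2 \<longrightarrow> store_eq A S1 S2 \<longrightarrow> final_eq A (S1', pc1', v1) (S2', pc2', v2)))
 \<and> (thunk_eval th1 S1 pc t S1' pc1' v1 \<longrightarrow> (\<forall>th2 S2 S2' pc2' v2. thunk_eval th2 S2 pc t S2' pc2' v2 \<longrightarrow>
      list_all2 (val_eq A) th1 th2 \<longrightarrow> store_eq A S1 S2 \<longrightarrow> final_eq A (S1', pc1', v1) (S2', pc2', v2)))"
proof (induction rule: force_eval_thunk_eval.induct)
  case (Force \<theta> e t \<theta>' \<Sigma> pc \<Sigma>' pc' v)
  show ?case
  proof (intro allI impI)
    fix th2 S2 S2' pc2' v2
    assume a: "force_eval th2 S2 pc e S2' pc2' v2" "list_all2 (val_eq A) \<theta> th2" "store_eq A \<Sigma> S2"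
    from a(1) obtain t2 th2' where b: "pure_eval th2 e (VThunk t2 th2')" "thunk_eval th2' S2 pc t2 S2' pc2' v2"
      by (rule FE) blast
    have "val_eq A (VThunk t \<theta>') (VThunk t2 th2')" using pure_ni Force(1) b(1) a(2) by blast
    then have "t2 = t" "list_all2 (val_eq A) \<theta>' th2'" by (auto elim: VE_Thunk)
    then show "final_eq A (\<Sigma>', pc', v) (S2', pc2', v2)" using Force(3) b a by blast
  qed
next
  case (TReturn \<theta> e v \<Sigma> pc)
  then show ?case by (auto elim!: TE_Return simp: final_eq_def dest: pure_ni)
next
  case (TBind \<theta> \<Sigma> pc e1 \<Sigma>' pc' v1 e2 \<Sigma>'' pc'' v)
  show ?case
  proof (intro allI impI)
    fix th2 S2 S2' pc2' v2
    assume a: "thunk_eval th2 S2 pc (Bind e1 e2) S2' pc2' v2" "list_all2 (val_eq A) \<theta> th2" "store_eq A \<Sigma> S2"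
    from a(1) obtain Sm pcm w1 where b: "force_eval th2 S2 pc e1 Sm pcm w1"
      "force_eval (w1 # th2) Sm pcm e2 S2' pc2' v2" by (rule TE_Bind) blast
    have f1: "final_eq A (\<Sigma>', pc', v1) (Sm, pcm, w1)" using TBind.IH(1) a b by blast
    show "final_eq A (\<Sigma>'', pc'', v) (S2', pc2', v2)"
    proof (cases "pc' \<le> A")
      case True
      then have "pcm = pc'" "val_eq A v1 w1" "store_eq A \<Sigma>' Sm" using f1 by (auto simp: final_eq_def)
      then show ?thesis using TBind.IH(2) a b by auto
    next
      case False
      then have "\<not> pcm \<le> A" "store_eq A \<Sigma>' Sm" using f1 by (auto simp: final_eq_def)
      moreover have "pc' \<le> pc''" "\<forall>l. \<not> pc' \<le> l \<longrightarrow> \<Sigma>'' l = \<Sigma>' l"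
        using confine TBind.hyps(2) by blast+
      moreover have "pcm \<le> pc2'" "\<forall>l. \<not> pcm \<le> l \<longrightarrow> S2' l = Sm l"
        using confine b(2) by blast+
      note h = calculation this
      have "store_eq A \<Sigma>'' S2'"
        unfolding store_eq_def
      proof
        fix l
        show "mem_eq A l (\<Sigma>'' l) (S2' l)"
        proof (cases "l \<le> A")
          case True
          then have "\<not> pc' \<le> l" "\<not> pcm \<le> l" using False h(1) order_trans by blast+
          then show ?thesis using h by (simp add: store_eq_def)
        next
          case False
          then show ?thesis by (simp add: mem_eq_def)
        qed
      qed
      moreover have "\<not> pc'' \<le> A" "\<not> pc2' \<le> A" using False h order_trans by blast+
      ultimately show ?thesis by (simp add: final_eq_def)
    qed
  qed
next
  case (TToLabeled \<theta> \<Sigma> pc e \<Sigma>' pc' v)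
  show ?case
  proof (intro allI impI)
    fix th2 S2 S2' pc2' v2
    assume a: "thunk_eval th2 S2 pc (ToLabeled e) S2' pc2' v2" "list_all2 (val_eq A) \<theta> th2" "store_eq A \<Sigma> S2"
    from a(1) obtain pcm w where b: "force_eval th2 S2 pc e S2' pcm w" "pc2' = pc" "v2 = VLabeled pcm w"
      by (rule TE_ToLabeled) blast
    have f1: "final_eq A (\<Sigma>', pc', v) (S2', pcm, w)" using TToLabeled(2) a b by blast
    then show "final_eq A (\<Sigma>', pc, VLabeled pc' v) (S2', pc2', v2)"
      using b by (auto simp: final_eq_def intro: val_eq.intros)
  qed
next
  case (TUnlabel \<theta> e l v \<Sigma> pc)
  show ?case
  proof (intro allI impI)
    fix th2 S2 S2' pc2' v2
    assume a: "thunk_eval th2 S2 pc (Unlabel e) S2' pc2' v2" "list_all2 (val_eq A) \<theta> th2" "store_eq A \<Sigma> S2"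
    from a(1) obtain l2 where b: "pure_eval th2 e (VLabeled l2 v2)" "S2' = S2" "pc2' = sup pc l2"
      by (rule TE_Unlabel) blast
    have "val_eq A (VLabeled l v) (VLabeled l2 v2)" using pure_ni TUnlabel b a by blast
    then show "final_eq A (\<Sigma>, sup pc l, v) (S2', pc2', v2)"
      using a b by (auto simp: final_eq_def elim: VE_Labeled)
  qed
next
  case (TLabelOf \<theta> e l v \<Sigma> pc)
  show ?case
  proof (intro allI impI)
    fix th2 S2 S2' pc2' v2
    assume a: "thunk_eval th2 S2 pc (LabelOf e) S2' pc2' v2" "list_all2 (val_eq A) \<theta> th2" "store_eq A \<Sigma> S2"
    from a(1) obtain l2 w where b: "pure_eval th2 e (VLabeled l2 w)" "S2' = S2" "pc2' = sup pc l2" "v2 = VLab l2"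
      by (rule TE_LabelOf) blast
    have "val_eq A (VLabeled l v) (VLabeled l2 w)" using pure_ni TLabelOf b a by blast
    then show "final_eq A (\<Sigma>, sup pc l, VLab l) (S2', pc2', v2)"
      using a b by (auto simp: final_eq_def elim: VE_Labeled intro: val_eq.intros)
  qed
next
  case (TGetLabel \<theta> \<Sigma> pc)
  then show ?case by (auto elim!: TE_GetLabel simp: final_eq_def intro: val_eq.intros)
next
  case (TTaint \<theta> e l \<Sigma> pc)
  show ?case
  proof (intro allI impI)
    fix th2 S2 S2' pc2' v2
    assume a: "thunk_eval th2 S2 pc (Taint e) S2' pc2' v2" "list_all2 (val_eq A) \<theta> th2" "store_eq A \<Sigma> S2"
    from a(1) obtain l2 where b: "pure_eval th2 e (VLab l2)" "S2' = S2" "pc2' = sup pc l2" "v2 = VUnit"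
      by (rule TE_Taint) blast
    have "val_eq A (VLab l) (VLab l2)" using pure_ni TTaint b a by blast
    then show "final_eq A (\<Sigma>, sup pc l, VUnit) (S2', pc2', v2)"
      using a b by (auto simp: final_eq_def elim: VE_Lab intro: val_eq.intros)
  qed
next
  case (TNew \<theta> e l v pc n \<Sigma>)
  show ?case
  proof (intro allI impI)
    fix th2 S2 S2' pc2' v2
    assume a: "thunk_eval th2 S2 pc (New e) S2' pc2' v2" "list_all2 (val_eq A) \<theta> th2" "store_eq A \<Sigma> S2"
    from a(1) obtain l2 w where b: "pure_eval th2 e (VLabeled l2 w)" "pc \<le> l2"
       "S2' = S2(l2 := mem_upd (S2 l2) (length (S2 l2)) w)" "pc2' = pc" "v2 = VRef (length (S2 l2)) l2"
      by (rule TE_New) blast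
    have "val_eq A (VLabeled l v) (VLabeled l2 w)" using pure_ni TNew b a by blast
    then consider "l2 = l" "l \<le> A" "val_eq A v w" | "\<not> l \<le> A" "\<not> l2 \<le> A" by (auto elim: VE_Labeled)
    then show "final_eq A (\<Sigma>(l := mem_upd (\<Sigma> l) n v), pc, VRef n l) (S2', pc2', v2)"
    proof cases
      case 1
      then have m: "list_all2 (val_eq A) (\<Sigma> l) (S2 l)" using a(3) by (auto simp: store_eq_def mem_eq_def)
      then have "length (S2 l) = n" using TNew list_all2_lengthD by metis
      then show ?thesis using 1 b m TNew a(3)
        by (auto simp: final_eq_def intro!: store_upd mem_upd_rel intro: val_eq.intros)
    next
      case 2
      then show ?thesis using b a(3)
        by (auto simp: final_eq_def intro!: store_upd_high intro: val_eq.intros)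
    qed
  qed
next
  case (TRead \<theta> e n l \<Sigma> v pc)
  show ?case
  proof (intro allI impI)
    fix th2 S2 S2' pc2' v2
    assume a: "thunk_eval th2 S2 pc (Read e) S2' pc2' v2" "list_all2 (val_eq A) \<theta> th2" "store_eq A \<Sigma> S2"
    from a(1) obtain n2 l2 where b: "pure_eval th2 e (VRef n2 l2)" "n2 < length (S2 l2)"
       "S2' = S2" "pc2' = sup pc l2" "v2 = S2 l2 ! n2"
      by (rule TE_Read) blast
    have "val_eq A (VRef n l) (VRef n2 l2)" using pure_ni TRead b a by blast
    then consider "l2 = l" "n2 = n" "l \<le> A" | "\<not> l \<le> A" "\<not> l2 \<le> A" by (auto elim: VE_Ref)
    then show "final_eq A (\<Sigma>, sup pc l, v) (S2', pc2', v2)"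
    proof cases
      case 1
      then have m: "list_all2 (val_eq A) (\<Sigma> l) (S2 l)" using a(3) by (auto simp: store_eq_def mem_eq_def)
      then show ?thesis using 1 b TRead a(3)
        by (auto simp: final_eq_def dest: list_all2_nthD)
    next
      case 2
      then show ?thesis using b a(3) by (auto simp: final_eq_def)
    qed
  qed
next
  case (TWrite \<theta> e1 n l1 e2 l2 v pc \<Sigma>)
  show ?case
  proof (intro allI impI)
    fix th2 S2 S2' pc2' v2
    assume a: "thunk_eval th2 S2 pc (Write e1 e2) S2' pc2' v2" "list_all2 (val_eq A) \<theta> th2" "store_eq A \<Sigma> S2"
    from a(1) obtain n' k1 k2 w where b: "pure_eval th2 e1 (VRef n' k1)" "pure_eval th2 e2 (VLabeled k2 w)"
       "k2 \<le> k1" "pc \<le> k1" "S2' = S2(k1 := mem_upd (S2 k1) n' w)" "pc2' = pc" "v2 = VUnit"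
      by (rule TE_Write) blast
    have r: "val_eq A (VRef n l1) (VRef n' k1)" using pure_ni TWrite b a by blast
    have lv: "val_eq A (VLabeled l2 v) (VLabeled k2 w)" using pure_ni TWrite b a by blast
    from r consider "k1 = l1" "n' = n" "l1 \<le> A" | "\<not> l1 \<le> A" "\<not> k1 \<le> A" by (auto elim: VE_Ref)
    then show "final_eq A (\<Sigma>(l1 := mem_upd (\<Sigma> l1) n v), pc, VUnit) (S2', pc2', v2)"
    proof cases
      case 1
      then have "l2 \<le> A" using TWrite order_trans by blast
      then have "val_eq A v w" using lv by (auto elim: VE_Labeled)
      moreover have m: "list_all2 (val_eq A) (\<Sigma> l1) (S2 l1)" using a(3) 1 by (auto simp: store_eq_def mem_eq_def)
      ultimately show ?thesis using 1 b a(3)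
        by (auto simp: final_eq_def intro!: store_upd mem_upd_rel intro: val_eq.intros)
    next
      case 2
      then show ?thesis using b a(3)
        by (auto simp: final_eq_def intro!: store_upd_high intro: val_eq.intros)
    qed
  qed
next
  case (TLabelOfRef \<theta> e n l \<Sigma> pc)
  show ?case
  proof (intro allI impI)
    fix th2 S2 S2' pc2' v2
    assume a: "thunk_eval th2 S2 pc (LabelOfRef e) S2' pc2' v2" "list_all2 (val_eq A) \<theta> th2" "store_eq A \<Sigma> S2"
    from a(1) obtain n2 l2 where b: "pure_eval th2 e (VRef n2 l2)" "S2' = S2" "pc2' = sup pc l2" "v2 = VLab l2"
      by (rule TE_LabelOfRef) blast
    have "val_eq A (VRef n l) (VRef n2 l2)" using pure_ni TLabelOfRef b a by blast
    then show "final_eq A (\<Sigma>, sup pc l, VLab l) (S2', pc2', v2)"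
      using a b by (auto simp: final_eq_def elim: VE_Ref intro: val_eq.intros)
  qed
qed

theorem mainTheorem2:
  fixes A :: "'l::lattice"
  shows "(\<forall>\<Sigma>1 pc1 e1 \<Sigma>2 pc2 e2 \<theta>1 \<theta>2 \<Sigma>1' pc1' v1 \<Sigma>2' pc2' v2.
            force_eval \<theta>1 \<Sigma>1 pc1 e1 \<Sigma>1' pc1' v1 \<longrightarrow>
            force_eval \<theta>2 \<Sigma>2 pc2 e2 \<Sigma>2' pc2' v2 \<longrightarrow>
            env_eq A \<theta>1 \<theta>2 \<longrightarrow>
            init_eq A (\<Sigma>1, pc1, e1) (\<Sigma>2, pc2, e2) \<longrightarrow>
            final_eq A (\<Sigma>1', pc1', v1) (\<Sigma>2', pc2', v2))
       \<and> (\<forall>\<Sigma>1 pc1 t1 \<Sigma>2 pc2 t2 \<theta>1 \<theta>2 \<Sigma>1' pc1' v1 \<Sigma>2' pc2' v2.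
            thunk_eval \<theta>1 \<Sigma>1 pc1 t1 \<Sigma>1' pc1' v1 \<longrightarrow>
            thunk_eval \<theta>2 \<Sigma>2 pc2 t2 \<Sigma>2' pc2' v2 \<longrightarrow>
            env_eq A \<theta>1 \<theta>2 \<longrightarrow>
            init_eq A (\<Sigma>1, pc1, t1) (\<Sigma>2, pc2, t2) \<longrightarrow>
            final_eq A (\<Sigma>1', pc1', v1) (\<Sigma>2', pc2', v2))"
  using main_ni[of _ _ _ _ _ _ _ A] unfolding env_eq_def init_eq_def by auto

end
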